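(* Let $y_0\in Y$ satisfy $d^*(y_0)=k^*(y_0)$. - If $V_T(\cdot)$ is continuous on $Y$ for every integer $T>1$, then the limit $\lim_{T\to\infty}V_T(y_0)$ exists and equals $d^*(y_0)$. - If $h_\alpha(\cdot)$ is continuous on $Y$ for every $\alpha\in(0,1)$, then the limit $\lim_{\alpha\uparrow1}h_\alpha(y_0)$ exists and equals $d^*(y_0)$.
   Context: Let $Y\subset\mathbb{R}^m$ be nonempty compact, $U_0$ a compact metric space, $U(\cdot):Y\rightsquigarrow U_0$ upper semicontinuous and compact-valued, and $f:\mathbb{R}^m\times U_0\to\mathbb{R}^m$, $k:\mathbb{R}^m\times U_0\to\mathbb{R}$ continuous. Put $A(y):=\{u\in U(y): f(y,u)\in Y\}$ and $G:=\{(y,u):y\in Y,\ u\in A(y)\}$. Standing assumption: $A(y)\ne\emptyset$ for all $y\in Y$. For $y_0\in Y$, an admissible process on $\{0,\dots,T-1\}$ (respectively on $\{0,1,\dots\}$) is a pair $(y(t),u(t))$ with $y(0)=y_0$, $u(t)\in A(y(t))$ and $y(t+1)=f(y(t),u(t))$. The controls form $\mathcal U_T(y_0)$ (respectively $\mathcal U(y_0)$). Value functions: $$V_T(y_0):=\frac1T\min_{u\in\mathcal U_T(y_0)}\sum_{t=0}^{T-1}k(y(t),u(t)),\qquad h_\alpha(y_0):=(1-\alpha)\min_{u\in\mathcal U(y_0)}\sum_{t=0}^\infty\alpha^tk(y(t),u(t)).$$ LP value: - $\mathcal P(G)$ denotes the Borel probability measures on $G$ and $\mathcal M_+(G)$ the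 finite nonnegative Borel measures on $G$. - $W:=\{\gamma\in\mathcal P(G):\int_G(\varphi(f(y,u))-\varphi(y))\,d\gamma=0\ \forall\varphi\in C(Y)\}$. - $k^*(y_0)$ is the infimum of $\int_Gk\,d\gamma$ over pairs $(\gamma,\xi)\in\mathcal P(G)\times\mathcal M_+(G)$ with $\gamma\in W$ and $\int_G(\varphi(y_0)-\varphi(y))\,d\gamma+\int_G(\varphi(f(y,u))-\varphi(y))\,d\xi=0$ for all $\varphi\in C(Y)$. Dual value: $d^*(y_0):=\sup\mu$, where the supremum is over triples $(\mu,\psi,\eta)\in\mathbb{R}\times C(Y)\times C(Y)$ with, for all $(y,u)\in G$: $$k(y,u)+\psi(y_0)-\psi(y)+\eta(f(y,u))-\eta(y)-\mu\ge0,\qquad\psi(f(y,u))-\psi(y)\ge0.$$ *)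

theory Defs
  imports "HOL-Analysis.Analysis" "HOL-Probability.Probability"
begin

definition usc_on :: "'y::metric_space set \<Rightarrow> ('y \<Rightarrow> 'u::topological_space set) \<Rightarrow> bool" where
  "usc_on Y U \<longleftrightarrow> (\<forall>y\<in>Y. \<forall>V. open V \<and> U y \<subseteq> V \<longrightarrow>
      (\<exists>e>0. \<forall>y'\<in>Y. dist y' y < e \<longrightarrow> U y' \<subseteq> V))"

definition Aset :: "('y \<Rightarrow> 'u \<Rightarrow> 'y) \<Rightarrow> 'y set \<Rightarrow> ('y \<Rightarrow> 'u set) \<Rightarrow> 'y \<Rightarrow> 'u set" where
  "Aset f Y U y = {u \<in> U y. f y u \<in> Y}"

definition Gset :: "('y \<Rightarrow> 'u \<Rightarrow> 'y) \<Rightarrow> 'y set \<Rightarrow> ('y \<Rightarrow> 'u set) \<Rightarrow> ('y \<times> 'u) set" where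
  "Gset f Y U = {(y, u). y \<in> Y \<and> u \<in> Aset f Y U y}"

fun traj :: "('y \<Rightarrow> 'u \<Rightarrow> 'y) \<Rightarrow> 'y \<Rightarrow> (nat \<Rightarrow> 'u) \<Rightarrow> nat \<Rightarrow> 'y" where
  "traj f y0 u 0 = y0"
| "traj f y0 u (Suc t) = f (traj f y0 u t) (u t)"

definition adm_T :: "('y \<Rightarrow> 'u \<Rightarrow> 'y) \<Rightarrow> 'y set \<Rightarrow> ('y \<Rightarrow> 'u set) \<Rightarrow> nat \<Rightarrow> 'y \<Rightarrow> (nat \<Rightarrow> 'u) set" where
  "adm_T f Y U T y0 = {u. \<forall>t<T. u t \<in> Aset f Y U (traj f y0 u t)}"

definition adm :: "('y \<Rightarrow> 'u \<Rightarrow> 'y) \<Rightarrow> 'y set \<Rightarrow> ('y \<Rightarrow> 'u set) \<Rightarrow> 'y \<Rightarrow> (nat \<Rightarrow> 'u) set" where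
  "adm f Y U y0 = {u. \<forall>t. u t \<in> Aset f Y U (traj f y0 u t)}"

definition V_T :: "('y \<Rightarrow> 'u \<Rightarrow> 'y) \<Rightarrow> ('y \<Rightarrow> 'u \<Rightarrow> real) \<Rightarrow> 'y set \<Rightarrow> ('y \<Rightarrow> 'u set)
    \<Rightarrow> nat \<Rightarrow> 'y \<Rightarrow> real" where
  "V_T f k Y U T y0 = (1 / real T) *
     Inf {(\<Sum>t<T. k (traj f y0 u t) (u t)) | u. u \<in> adm_T f Y U T y0}"

definition h_disc :: "('y \<Rightarrow> 'u \<Rightarrow> 'y) \<Rightarrow> ('y \<Rightarrow> 'u \<Rightarrow> real) \<Rightarrow> 'y set \<Rightarrow> ('y \<Rightarrow> 'u set)
    \<Rightarrow> real \<Rightarrow> 'y \<Rightarrow> real" where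
  "h_disc f k Y U \<alpha> y0 = (1 - \<alpha>) *
     Inf {(\<Sum>t. \<alpha> ^ t * k (traj f y0 u t) (u t)) | u. u \<in> adm f Y U y0}"

definition borel_prob_on :: "'a::topological_space set \<Rightarrow> 'a measure \<Rightarrow> bool" where
  "borel_prob_on S M \<longleftrightarrow> prob_space M \<and> sets M = sets (restrict_space borel S)"

definition borel_finite_on :: "'a::topological_space set \<Rightarrow> 'a measure \<Rightarrow> bool" where
  "borel_finite_on S M \<longleftrightarrow> finite_measure M \<and> sets M = sets (restrict_space borel S)"

definition Wset :: "('y \<Rightarrow> 'u \<Rightarrow> 'y) \<Rightarrow> 'y::topological_space set \<Rightarrow> ('y \<Rightarrow> 'u::topological_space set)
    \<Rightarrow> ('y \<times> 'u) measure set" where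
  "Wset f Y U = {\<gamma>. borel_prob_on (Gset f Y U) \<gamma> \<and>
     (\<forall>\<phi>::'y \<Rightarrow> real. continuous_on Y \<phi> \<longrightarrow>
        (\<integral>z. \<phi> (f (fst z) (snd z)) - \<phi> (fst z) \<partial>\<gamma>) = 0)}"

definition k_star :: "('y \<Rightarrow> 'u \<Rightarrow> 'y) \<Rightarrow> ('y \<Rightarrow> 'u \<Rightarrow> real) \<Rightarrow> 'y::topological_space set
    \<Rightarrow> ('y \<Rightarrow> 'u::topological_space set) \<Rightarrow> 'y \<Rightarrow> ereal" where
  "k_star f k Y U y0 = Inf {ereal (\<integral>z. k (fst z) (snd z) \<partial>\<gamma>) | \<gamma> \<xi>.
     \<gamma> \<in> Wset f Y U \<and> borel_finite_on (Gset f Y U) \<xi> \<and>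
     (\<forall>\<phi>::'y \<Rightarrow> real. continuous_on Y \<phi> \<longrightarrow>
        (\<integral>z. \<phi> y0 - \<phi> (fst z) \<partial>\<gamma>) + (\<integral>z. \<phi> (f (fst z) (snd z)) - \<phi> (fst z) \<partial>\<xi>) = 0)}"

definition d_star :: "('y \<Rightarrow> 'u \<Rightarrow> 'y) \<Rightarrow> ('y \<Rightarrow> 'u \<Rightarrow> real) \<Rightarrow> 'y::topological_space set
    \<Rightarrow> ('y \<Rightarrow> 'u set) \<Rightarrow> 'y \<Rightarrow> ereal" where
  "d_star f k Y U y0 = Sup {ereal \<mu> | \<mu>. \<exists>\<psi> \<eta> :: 'y \<Rightarrow> real.
     continuous_on Y \<psi> \<and> continuous_on Y \<eta> \<and>
     (\<forall>(y, u) \<in> Gset f Y U.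
        k y u + \<psi> y0 - \<psi> y + \<eta> (f y u) - \<eta> y - \<mu> \<ge> 0 \<and> \<psi> (f y u) - \<psi> y \<ge> 0)}"

end

theory Submission
  imports Defs
begin


lemma traj_shift: "traj f y (case_nat u v) (Suc t) = traj f (f y u) v t"
  by (induction t) auto

lemma traj_adm_T_Y:
  assumes "u \<in> adm_T f Y U T z" "z \<in> Y" "t \<le> T"
  shows "traj f z u t \<in> Y"
  using assms(3)
proof (induction t)
  case 0 then show ?case using assms by simp
next
  case (Suc t)
  then have "u t \<in> Aset f Y U (traj f z u t)" using assms(1) unfolding adm_T_def by auto
  then show ?case by (simp add: Aset_def)
qed

lemma traj_adm_T_G:
  assumes "u \<in> adm_T f Y U T z" "z \<in> Y" "t < T"
  shows "(traj f z u t, u t) \<in> Gset f Y U"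
  using traj_adm_T_Y[OF assms(1,2), of t] assms unfolding adm_T_def Gset_def by auto

lemma adm_adm_T: "u \<in> adm f Y U z \<Longrightarrow> u \<in> adm_T f Y U T z"
  unfolding adm_def adm_T_def by auto

lemma adm_T_adm: "(\<And>T. u \<in> adm_T f Y U T z) \<Longrightarrow> u \<in> adm f Y U z"
  unfolding adm_def adm_T_def by auto

lemma traj_adm_G:
  assumes "u \<in> adm f Y U z" "z \<in> Y"
  shows "(traj f z u t, u t) \<in> Gset f Y U"
  using traj_adm_T_G[OF adm_adm_T[OF assms(1)] assms(2), of t "Suc t"] by simp

lemma adm_exists:
  assumes "\<forall>y\<in>Y. Aset f Y U y \<noteq> {}" "z \<in> Y"
  shows "\<exists>u. u \<in> adm f Y U z"
proof -
  define sel where "sel y = (SOME u. u \<in> Aset f Y U y)" for y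
  have sel: "sel y \<in> Aset f Y U y" if "y \<in> Y" for y
    using assms(1) that unfolding sel_def by (simp add: some_in_eq)
  define yy where "yy t = ((\<lambda>y. f y (sel y)) ^^ t) z" for t
  define u where "u t = sel (yy t)" for t
  have tr: "traj f z u t = yy t" for t
    by (induction t) (auto simp: yy_def u_def)
  have yyY: "yy t \<in> Y" for t
  proof (induction t)
    case 0 then show ?case using assms by (simp add: yy_def)
  next
    case (Suc t)
    have "yy (Suc t) = f (yy t) (sel (yy t))" by (simp add: yy_def)
    then show ?case using sel[OF Suc] by (simp add: Aset_def)
  qed
  have "u \<in> adm f Y U z" unfolding adm_def using tr sel yyY u_def by auto
  then show ?thesis by blast
qed

lemma adm_case_nat:
  assumes "(y, a) \<in> Gset f Y U" "v \<in> adm_T f Y U T (f y a)"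
  shows "case_nat a v \<in> adm_T f Y U (Suc T) y"
  unfolding adm_T_def
proof (intro CollectI allI impI)
  fix t assume "t < Suc T"
  show "case_nat a v t \<in> Aset f Y U (traj f y (case_nat a v) t)"
  proof (cases t)
    case 0 then show ?thesis using assms(1) by (simp add: Gset_def)
  next
    case (Suc s) then show ?thesis using assms(2) \<open>t < Suc T\<close> traj_shift[of f y a v s]
      by (simp add: adm_T_def)
  qed
qed

lemma adm_case_nat_inf:
  assumes "(y, a) \<in> Gset f Y U" "v \<in> adm f Y U (f y a)"
  shows "case_nat a v \<in> adm f Y U y"
  using adm_case_nat[OF assms(1) adm_adm_T[OF assms(2)]] unfolding adm_T_def adm_def by blast


definition Ik :: "('y \<Rightarrow> 'u \<Rightarrow> 'y) \<Rightarrow> ('y \<Rightarrow> 'u \<Rightarrow> real) \<Rightarrow> 'y set \<Rightarrow> ('y \<Rightarrow> 'u set)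
    \<Rightarrow> nat \<Rightarrow> 'y \<Rightarrow> real" where
  "Ik f k Y U T z = Inf {(\<Sum>t<T. k (traj f z u t) (u t)) | u. u \<in> adm_T f Y U T z}"

lemma V_T_Ik: "T > 0 \<Longrightarrow> V_T f k Y U T z = Ik f k Y U T z / real T"
  unfolding V_T_def Ik_def by simp

locale ctx =
  fixes Y :: "'y::euclidean_space set" and U0 :: "'u::metric_space set"
    and U :: "'y \<Rightarrow> 'u set" and f :: "'y \<Rightarrow> 'u \<Rightarrow> 'y" and k :: "'y \<Rightarrow> 'u \<Rightarrow> real"
    and M :: real
  assumes Ane: "\<forall>y\<in>Y. Aset f Y U y \<noteq> {}"
    and kM: "\<And>y a. (y, a) \<in> Gset f Y U \<Longrightarrow> \<bar>k y a\<bar> \<le> M"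
begin

lemma sum_bounds:
  assumes "u \<in> adm_T f Y U T z" "z \<in> Y"
  shows "\<bar>\<Sum>t<T. k (traj f z u t) (u t)\<bar> \<le> real T * M"
proof -
  have "\<bar>\<Sum>t<T. k (traj f z u t) (u t)\<bar> \<le> (\<Sum>t<T. \<bar>k (traj f z u t) (u t)\<bar>)"
    by (rule sum_abs)
  also have "\<dots> \<le> (\<Sum>t<T. M)"
    by (intro sum_mono kM traj_adm_T_G[OF assms]) simp
  finally show ?thesis by simp
qed

lemma Ik_ne: "z \<in> Y \<Longrightarrow> {(\<Sum>t<T. k (traj f z u t) (u t)) | u. u \<in> adm_T f Y U T z} \<noteq> {}"
proof -
  assume z: "z \<in> Y"
  obtain u where "u \<in> adm f Y U z" using adm_exists[OF Ane z] by blast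
  then have "u \<in> adm_T f Y U T z" by (rule adm_adm_T)
  then show ?thesis by blast
qed

lemma Ik_bdd: "z \<in> Y \<Longrightarrow> bdd_below {(\<Sum>t<T. k (traj f z u t) (u t)) | u. u \<in> adm_T f Y U T z}"
proof -
  assume z: "z \<in> Y"
  show ?thesis unfolding bdd_below_def
  proof (intro exI ballI)
    fix x assume "x \<in> {(\<Sum>t<T. k (traj f z u t) (u t)) | u. u \<in> adm_T f Y U T z}"
    then obtain u where u: "u \<in> adm_T f Y U T z" and x: "x = (\<Sum>t<T. k (traj f z u t) (u t))" by blast
    show "- (real T * M) \<le> x" using sum_bounds[OF u z] unfolding x by linarith
  qed
qed

lemma Ik_le_elem: "z \<in> Y \<Longrightarrow> u \<in> adm_T f Y U T z \<Longrightarrow> Ik f k Y U T z \<le> (\<Sum>t<T. k (traj f z u t) (u t))"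
  unfolding Ik_def by (rule cInf_lower[OF _ Ik_bdd]) auto

lemma Ik_ge_iff: "z \<in> Y \<Longrightarrow> (\<And>u. u \<in> adm_T f Y U T z \<Longrightarrow> c \<le> (\<Sum>t<T. k (traj f z u t) (u t))) \<Longrightarrow> c \<le> Ik f k Y U T z"
  unfolding Ik_def by (rule cInf_greatest[OF Ik_ne]) auto

lemma Ik_abs: "z \<in> Y \<Longrightarrow> \<bar>Ik f k Y U T z\<bar> \<le> real T * M"
proof -
  assume z: "z \<in> Y"
  obtain u0 where "u0 \<in> adm f Y U z" using adm_exists[OF Ane z] by blast
  then have u: "u0 \<in> adm_T f Y U T z" by (rule adm_adm_T)
  have "Ik f k Y U T z \<le> real T * M" using Ik_le_elem[OF z u] sum_bounds[OF u z] by linarith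
  moreover have "- (real T * M) \<le> Ik f k Y U T z"
  proof (rule Ik_ge_iff[OF z])
    fix u assume u: "u \<in> adm_T f Y U T z"
    show "- (real T * M) \<le> (\<Sum>t<T. k (traj f z u t) (u t))" using sum_bounds[OF u z] by linarith
  qed
  ultimately show ?thesis by simp
qed

lemma Ik_DP:
  assumes "(y, a) \<in> Gset f Y U"
  shows "Ik f k Y U (Suc T) y \<le> k y a + Ik f k Y U T (f y a)"
proof -
  have y: "y \<in> Y" and fy: "f y a \<in> Y" using assms by (auto simp: Gset_def Aset_def)
  have "Ik f k Y U (Suc T) y - k y a \<le> Ik f k Y U T (f y a)"
  proof (rule Ik_ge_iff[OF fy])
    fix v assume v: "v \<in> adm_T f Y U T (f y a)"
    have "Ik f k Y U (Suc T) y \<le> (\<Sum>t<Suc T. k (traj f y (case_nat a v) t) (case_nat a v t))"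
      by (rule Ik_le_elem[OF y adm_case_nat[OF assms v]])
    also have "\<dots> = k y a + (\<Sum>t<T. k (traj f (f y a) v t) (v t))"
      unfolding sum.lessThan_Suc_shift traj_shift by simp
    finally show "Ik f k Y U (Suc T) y - k y a \<le> (\<Sum>t<T. k (traj f (f y a) v t) (v t))" by simp
  qed
  then show ?thesis by simp
qed

lemma Ik_step:
  assumes z: "z \<in> Y"
  shows "Ik f k Y U T z - M \<le> Ik f k Y U (Suc T) z"
proof (rule Ik_ge_iff[OF z])
  fix u assume u: "u \<in> adm_T f Y U (Suc T) z"
  then have u': "u \<in> adm_T f Y U T z" unfolding adm_T_def by auto
  have "Ik f k Y U T z \<le> (\<Sum>t<T. k (traj f z u t) (u t))" by (rule Ik_le_elem[OF z u'])
  moreover have "- M \<le> k (traj f z u T) (u T)" using kM[OF traj_adm_T_G[OF u z, of T]] by simp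
  ultimately show "Ik f k Y U T z - M \<le> (\<Sum>t<Suc T. k (traj f z u t) (u t))" by simp
qed

lemma Ik_dual:
  assumes z: "z \<in> Y" and psic: "\<And>y a. (y, a) \<in> Gset f Y U \<Longrightarrow>
        k y a + \<psi> z - \<psi> y + \<eta> (f y a) - \<eta> y - \<mu> \<ge> 0 \<and> \<psi> (f y a) - \<psi> y \<ge> 0"
    and B: "\<And>y. y \<in> Y \<Longrightarrow> \<bar>\<eta> y\<bar> \<le> B"
  shows "real T * \<mu> - 2 * B \<le> Ik f k Y U T z"
proof (rule Ik_ge_iff[OF z])
  fix u assume u: "u \<in> adm_T f Y U T z"
  have ps: "\<psi> z \<le> \<psi> (traj f z u t)" if "t \<le> T" for t
    using that
  proof (induction t)
    case 0 then show ?case by simp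
  next
    case (Suc t)
    have "\<psi> (traj f z u t) \<le> \<psi> (traj f z u (Suc t))"
      using psic[OF traj_adm_T_G[OF u z, of t]] Suc by simp
    then show ?case using Suc by simp
  qed
  have "(\<Sum>t<T. \<mu> - (\<eta> (traj f z u (Suc t)) - \<eta> (traj f z u t))) \<le> (\<Sum>t<T. k (traj f z u t) (u t))"
  proof (rule sum_mono)
    fix t assume "t \<in> {..<T}"
    then show "\<mu> - (\<eta> (traj f z u (Suc t)) - \<eta> (traj f z u t)) \<le> k (traj f z u t) (u t)"
      using psic[OF traj_adm_T_G[OF u z, of t]] ps[of t] by simp
  qed
  moreover have tel: "(\<Sum>t<T. \<eta> (traj f z u (Suc t))) - (\<Sum>t<T. \<eta> (traj f z u t)) = \<eta> (traj f z u T) - \<eta> (traj f z u 0)"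
    unfolding sum_subtractf[symmetric] by (rule sum_lessThan_telescope)
  have "(\<Sum>t<T. \<mu> - (\<eta> (traj f z u (Suc t)) - \<eta> (traj f z u t)))
      = real T * \<mu> - (\<eta> (traj f z u T) - \<eta> z)"
    by (simp only: sum_subtractf sum_lessThan_telescope sum_constant card_lessThan tel traj.simps(1))
  moreover have "\<bar>\<eta> (traj f z u T)\<bar> \<le> B" "\<bar>\<eta> z\<bar> \<le> B"
    using B traj_adm_T_Y[OF u z, of T] z by auto
  ultimately show "real T * \<mu> - 2 * B \<le> (\<Sum>t<T. k (traj f z u t) (u t))" by (simp add: abs_le_iff)
qed

end



lemma geo_bound:
  fixes b :: "nat \<Rightarrow> real"
  assumes b: "\<And>t. \<bar>b t\<bar> \<le> B" and a: "0 < \<alpha>" "\<alpha> < 1"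
  shows "summable (\<lambda>t. \<alpha> ^ t * b t)" "\<bar>\<Sum>t. \<alpha> ^ t * b t\<bar> \<le> B / (1 - \<alpha>)"
proof -
  have g: "summable (\<lambda>t. B * \<alpha> ^ t)" using a by (intro summable_mult summable_geometric) simp
  have gs: "(\<Sum>t. B * \<alpha> ^ t) = B / (1 - \<alpha>)" using a by (simp add: suminf_mult suminf_geometric)
  have gn: "summable (\<lambda>t. - B * \<alpha> ^ t)" using a by (intro summable_mult summable_geometric) simp
  have "(\<Sum>t. - B * \<alpha> ^ t) = - B * (\<Sum>t. \<alpha> ^ t)"
    by (rule suminf_mult) (use a in \<open>simp add: summable_geometric\<close>)
  then have gns: "(\<Sum>t. - B * \<alpha> ^ t) = - B / (1 - \<alpha>)" using a by (simp add: suminf_geometric)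
  have le: "\<bar>\<alpha> ^ t * b t\<bar> \<le> B * \<alpha> ^ t" for t
    using b[of t] a by (simp add: abs_mult mult.commute mult_left_mono)
  show s: "summable (\<lambda>t. \<alpha> ^ t * b t)"
    by (rule summable_comparison_test[OF _ g]) (use le in auto)
  have "(\<Sum>t. \<alpha> ^ t * b t) \<le> (\<Sum>t. B * \<alpha> ^ t)"
    by (rule suminf_le[OF _ s g]) (use le in \<open>auto simp: abs_le_iff\<close>)
  moreover have "(\<Sum>t. - B * \<alpha> ^ t) \<le> (\<Sum>t. \<alpha> ^ t * b t)"
  proof (rule suminf_le[OF _ gn s])
    fix t show "- B * \<alpha> ^ t \<le> \<alpha> ^ t * b t" using le[of t] by (simp add: abs_le_iff)
  qed
  ultimately show "\<bar>\<Sum>t. \<alpha> ^ t * b t\<bar> \<le> B / (1 - \<alpha>)" using gs gns by (simp add: abs_le_iff)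
qed

definition Hd :: "('y \<Rightarrow> 'u \<Rightarrow> 'y) \<Rightarrow> ('y \<Rightarrow> 'u \<Rightarrow> real) \<Rightarrow> 'y set \<Rightarrow> ('y \<Rightarrow> 'u set)
    \<Rightarrow> real \<Rightarrow> 'y \<Rightarrow> real" where
  "Hd f k Y U \<alpha> z = Inf {(\<Sum>t. \<alpha> ^ t * k (traj f z u t) (u t)) | u. u \<in> adm f Y U z}"

lemma h_disc_Hd: "h_disc f k Y U \<alpha> z = (1 - \<alpha>) * Hd f k Y U \<alpha> z"
  unfolding h_disc_def Hd_def by simp

context ctx
begin

lemma S_bounds:
  assumes "u \<in> adm f Y U z" "z \<in> Y" "0 < \<alpha>" "\<alpha> < 1"
  shows "summable (\<lambda>t. \<alpha> ^ t * k (traj f z u t) (u t))"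
    "\<bar>\<Sum>t. \<alpha> ^ t * k (traj f z u t) (u t)\<bar> \<le> M / (1 - \<alpha>)"
  using geo_bound[of "\<lambda>t. k (traj f z u t) (u t)" M \<alpha>] kM[OF traj_adm_G[OF assms(1,2)]] assms(3,4)
  by auto

lemma Hd_ne: "z \<in> Y \<Longrightarrow> {(\<Sum>t. \<alpha> ^ t * k (traj f z u t) (u t)) | u. u \<in> adm f Y U z} \<noteq> {}"
proof -
  assume z: "z \<in> Y"
  obtain u where "u \<in> adm f Y U z" using adm_exists[OF Ane z] by blast
  then show ?thesis by blast
qed

lemma Hd_bdd:
  assumes z: "z \<in> Y" and a: "0 < \<alpha>" "\<alpha> < 1"
  shows "bdd_below {(\<Sum>t. \<alpha> ^ t * k (traj f z u t) (u t)) | u. u \<in> adm f Y U z}"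
  unfolding bdd_below_def
proof (intro exI ballI)
  fix x assume "x \<in> {(\<Sum>t. \<alpha> ^ t * k (traj f z u t) (u t)) | u. u \<in> adm f Y U z}"
  then obtain u where u: "u \<in> adm f Y U z" and x: "x = (\<Sum>t. \<alpha> ^ t * k (traj f z u t) (u t))" by blast
  show "- (M / (1 - \<alpha>)) \<le> x" using S_bounds(2)[OF u z a] unfolding x by linarith
qed

lemma Hd_le_elem: "z \<in> Y \<Longrightarrow> 0 < \<alpha> \<Longrightarrow> \<alpha> < 1 \<Longrightarrow> u \<in> adm f Y U z \<Longrightarrow>
    Hd f k Y U \<alpha> z \<le> (\<Sum>t. \<alpha> ^ t * k (traj f z u t) (u t))"
  unfolding Hd_def by (rule cInf_lower[OF _ Hd_bdd]) auto

lemma Hd_ge_iff: "z \<in> Y \<Longrightarrow> (\<And>u. u \<in> adm f Y U z \<Longrightarrow> c \<le> (\<Sum>t. \<alpha> ^ t * k (traj f z u t) (u t))) \<Longrightarrow> c \<le> Hd f k Y U \<alpha> z"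
  unfolding Hd_def by (rule cInf_greatest[OF Hd_ne]) auto

lemma Hd_ge:
  assumes z: "z \<in> Y" and a: "0 < \<alpha>" "\<alpha> < 1"
  shows "- (M / (1 - \<alpha>)) \<le> Hd f k Y U \<alpha> z"
proof (rule Hd_ge_iff[OF z])
  fix u assume u: "u \<in> adm f Y U z"
  show "- (M / (1 - \<alpha>)) \<le> (\<Sum>t. \<alpha> ^ t * k (traj f z u t) (u t))" using S_bounds(2)[OF u z a] by linarith
qed

lemma Hd_DP:
  assumes ya: "(y, a) \<in> Gset f Y U" and al: "0 < \<alpha>" "\<alpha> < 1"
  shows "Hd f k Y U \<alpha> y \<le> k y a + \<alpha> * Hd f k Y U \<alpha> (f y a)"
proof -
  have y: "y \<in> Y" and fy: "f y a \<in> Y" using ya by (auto simp: Gset_def Aset_def)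
  have "(Hd f k Y U \<alpha> y - k y a) / \<alpha> \<le> Hd f k Y U \<alpha> (f y a)"
  proof (rule Hd_ge_iff[OF fy])
    fix v assume v: "v \<in> adm f Y U (f y a)"
    define w where "w = case_nat a v"
    have w: "w \<in> adm f Y U y" unfolding w_def by (rule adm_case_nat_inf[OF ya v])
    have sw: "summable (\<lambda>t. \<alpha> ^ t * k (traj f y w t) (w t))" by (rule S_bounds(1)[OF w y al])
    have sv: "summable (\<lambda>t. \<alpha> ^ t * k (traj f (f y a) v t) (v t))" by (rule S_bounds(1)[OF v fy al])
    have "(\<Sum>t. \<alpha> ^ Suc t * k (traj f y w (Suc t)) (w (Suc t)))
        = (\<Sum>t. \<alpha> ^ t * k (traj f y w t) (w t)) - k y a"
      using suminf_split_head[OF sw] by (simp add: w_def)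
    moreover have "(\<Sum>t. \<alpha> ^ Suc t * k (traj f y w (Suc t)) (w (Suc t)))
        = \<alpha> * (\<Sum>t. \<alpha> ^ t * k (traj f (f y a) v t) (v t))"
      unfolding w_def traj_shift using suminf_mult[OF sv, of \<alpha>] by (simp add: mult.assoc)
    moreover have "Hd f k Y U \<alpha> y \<le> (\<Sum>t. \<alpha> ^ t * k (traj f y w t) (w t))"
      by (rule Hd_le_elem[OF y al w])
    ultimately have "Hd f k Y U \<alpha> y - k y a \<le> \<alpha> * (\<Sum>t. \<alpha> ^ t * k (traj f (f y a) v t) (v t))"
      by linarith
    then show "(Hd f k Y U \<alpha> y - k y a) / \<alpha> \<le> (\<Sum>t. \<alpha> ^ t * k (traj f (f y a) v t) (v t))"
      using al by (simp add: divide_le_eq mult.commute)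
  qed
  then have "Hd f k Y U \<alpha> y - k y a \<le> \<alpha> * Hd f k Y U \<alpha> (f y a)"
    using al by (simp add: divide_le_eq mult.commute)
  then show ?thesis by simp
qed

lemma Hd_dual:
  assumes z: "z \<in> Y" and al: "0 < \<alpha>" "\<alpha> < 1"
    and psic: "\<And>y a. (y, a) \<in> Gset f Y U \<Longrightarrow>
        k y a + \<psi> z - \<psi> y + \<eta> (f y a) - \<eta> y - \<mu> \<ge> 0 \<and> \<psi> (f y a) - \<psi> y \<ge> 0"
    and B: "\<And>y. y \<in> Y \<Longrightarrow> \<bar>\<eta> y\<bar> \<le> B"
  shows "\<mu> / (1 - \<alpha>) - 2 * B \<le> Hd f k Y U \<alpha> z"
proof (rule Hd_ge_iff[OF z])
  fix u assume u: "u \<in> adm f Y U z"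
  define a where "a t = \<eta> (traj f z u t)" for t
  have ps: "\<psi> z \<le> \<psi> (traj f z u t)" for t
  proof (induction t)
    case 0 then show ?case by simp
  next
    case (Suc t)
    have "\<psi> (traj f z u t) \<le> \<psi> (traj f z u (Suc t))"
      using psic[OF traj_adm_G[OF u z, of t]] by simp
    then show ?case using Suc by simp
  qed
  have aB: "\<bar>a t\<bar> \<le> B" for t unfolding a_def
    using B traj_adm_G[OF u z, of t] by (auto simp: Gset_def)
  have aB': "\<bar>a (Suc t)\<bar> \<le> B" for t using aB by simp
  note P = geo_bound[of a B, OF aB al]
  note Q = geo_bound[of "\<lambda>t. a (Suc t)" B, OF aB' al]
  have gm: "summable (\<lambda>t. \<alpha> ^ t * \<mu>)" using al by (intro summable_mult2 summable_geometric) simp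
  have gms: "(\<Sum>t. \<alpha> ^ t * \<mu>) = \<mu> / (1 - \<alpha>)" using al by (simp add: suminf_mult2[symmetric] suminf_geometric)
  have sl: "summable (\<lambda>t. \<alpha> ^ t * \<mu> + \<alpha> ^ t * a t - \<alpha> ^ t * a (Suc t))"
    by (intro summable_diff summable_add gm P(1) Q(1))
  have sle: "(\<Sum>t. \<alpha> ^ t * \<mu> + \<alpha> ^ t * a t - \<alpha> ^ t * a (Suc t))
      = \<mu> / (1 - \<alpha>) + (\<Sum>t. \<alpha> ^ t * a t) - (\<Sum>t. \<alpha> ^ t * a (Suc t))"
    using suminf_add[OF gm P(1)] suminf_diff[OF summable_add[OF gm P(1)] Q(1)] gms by simp
  have head: "(\<Sum>t. \<alpha> ^ t * a t) = a 0 + \<alpha> * (\<Sum>t. \<alpha> ^ t * a (Suc t))"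
  proof -
    have "(\<Sum>t. \<alpha> ^ Suc t * a (Suc t)) = (\<Sum>t. \<alpha> ^ t * a t) - a 0"
      using suminf_split_head[OF P(1)] by simp
    moreover have "(\<Sum>t. \<alpha> ^ Suc t * a (Suc t)) = \<alpha> * (\<Sum>t. \<alpha> ^ t * a (Suc t))"
      using suminf_mult[OF Q(1), of \<alpha>] by (simp add: mult.assoc)
    ultimately show ?thesis by simp
  qed
  have sk: "summable (\<lambda>t. \<alpha> ^ t * k (traj f z u t) (u t))" by (rule S_bounds(1)[OF u z al])
  have "(\<Sum>t. \<alpha> ^ t * \<mu> + \<alpha> ^ t * a t - \<alpha> ^ t * a (Suc t)) \<le> (\<Sum>t. \<alpha> ^ t * k (traj f z u t) (u t))"
  proof (rule suminf_le[OF _ sl sk])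
    fix t
    have "\<mu> + a t - a (Suc t) \<le> k (traj f z u t) (u t)"
      using psic[OF traj_adm_G[OF u z, of t]] ps[of t] by (simp add: a_def)
    then have "\<alpha> ^ t * (\<mu> + a t - a (Suc t)) \<le> \<alpha> ^ t * k (traj f z u t) (u t)"
      using al by (intro mult_left_mono) auto
    then show "\<alpha> ^ t * \<mu> + \<alpha> ^ t * a t - \<alpha> ^ t * a (Suc t) \<le> \<alpha> ^ t * k (traj f z u t) (u t)"
      by (simp add: algebra_simps)
  qed
  moreover have "\<bar>a 0\<bar> \<le> B" by (rule aB)
  moreover have "(1 - \<alpha>) * \<bar>\<Sum>t. \<alpha> ^ t * a (Suc t)\<bar> \<le> B"
    using Q(2) al by (simp add: field_simps)
  moreover have "(1 - \<alpha>) * (\<Sum>t. \<alpha> ^ t * a (Suc t)) \<le> (1 - \<alpha>) * \<bar>\<Sum>t. \<alpha> ^ t * a (Suc t)\<bar>"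
    using al by (intro mult_left_mono) auto
  moreover have "(\<Sum>t. \<alpha> ^ t * \<mu> + \<alpha> ^ t * a t - \<alpha> ^ t * a (Suc t))
     = \<mu> / (1 - \<alpha>) + a 0 - (1 - \<alpha>) * (\<Sum>t. \<alpha> ^ t * a (Suc t))"
    unfolding sle head by (simp add: algebra_simps)
  ultimately show "\<mu> / (1 - \<alpha>) - 2 * B \<le> (\<Sum>t. \<alpha> ^ t * k (traj f z u t) (u t))"
    by (simp add: abs_le_iff)
qed

end


lemma meas_cont:
  fixes g :: "'a::topological_space \<Rightarrow> 'b::topological_space"
  assumes "sets N = sets (restrict_space borel G)" "continuous_on G g"
  shows "g \<in> borel_measurable N"
proof -
  have "(borel_measurable N :: ('a \<Rightarrow> 'b) set) = borel_measurable (restrict_space borel G)"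
    by (rule measurable_cong_sets[OF assms(1)]) simp
  then show ?thesis using borel_measurable_continuous_on_restrict[OF assms(2)] by simp
qed

lemma space_G: "sets N = sets (restrict_space borel G) \<Longrightarrow> space N = G"
proof -
  assume "sets N = sets (restrict_space borel G)"
  then have "space N = space (restrict_space borel G)" by (rule sets_eq_imp_space_eq)
  then show ?thesis by (simp add: space_restrict_space)
qed

lemma int_cont:
  fixes g :: "_ \<Rightarrow> real"
  assumes "finite_measure N" "sets N = sets (restrict_space borel G)" "continuous_on G g"
    "\<And>z. z \<in> G \<Longrightarrow> \<bar>g z\<bar> \<le> C"
  shows "integrable N g"
proof -
  interpret finite_measure N by fact
  show ?thesis
    by (rule integrable_const_bound[of g C])
       (use assms space_G[OF assms(2)] meas_cont[OF assms(2,3)] in auto)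
qed

lemma cont_bounded:
  fixes \<phi> :: "'a::metric_space \<Rightarrow> real"
  assumes "compact Y" "continuous_on Y \<phi>"
  obtains C where "\<And>y. y \<in> Y \<Longrightarrow> \<bar>\<phi> y\<bar> \<le> C"
proof -
  have "bounded (\<phi> ` Y)" by (rule compact_imp_bounded[OF compact_continuous_image[OF assms(2,1)]])
  then obtain C where "\<forall>x\<in>\<phi> ` Y. norm x \<le> C" unfolding bounded_iff by blast
  then show ?thesis using that by auto
qed

lemma prob_int_const: "prob_space N \<Longrightarrow> integral\<^sup>L N (\<lambda>x. c) = (c::real)"
  by (simp add: prob_space.prob_space)

locale ctx2 = ctx Y U0 U f k M
  for Y :: "'y::euclidean_space set" and U0 :: "'u::metric_space set"
    and U :: "'y \<Rightarrow> 'u set" and f :: "'y \<Rightarrow> 'u \<Rightarrow> 'y" and k :: "'y \<Rightarrow> 'u \<Rightarrow> real"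
    and M :: real +
  assumes cY: "compact Y"
    and fG: "continuous_on (Gset f Y U) (\<lambda>z. f (fst z) (snd z))"
    and kG: "continuous_on (Gset f Y U) (\<lambda>z. k (fst z) (snd z))"
begin

lemma G_Y: "z \<in> Gset f Y U \<Longrightarrow> fst z \<in> Y" "z \<in> Gset f Y U \<Longrightarrow> f (fst z) (snd z) \<in> Y"
  by (auto simp: Gset_def Aset_def)

lemma int_lemmas:
  assumes N: "finite_measure N" "sets N = sets (restrict_space borel (Gset f Y U))"
    and \<phi>: "continuous_on Y (\<phi> :: 'y \<Rightarrow> real)"
  shows "integrable N (\<lambda>z. \<phi> (fst z))" "integrable N (\<lambda>z. \<phi> (f (fst z) (snd z)))"
    "integrable N (\<lambda>z. k (fst z) (snd z))"
proof -
  obtain C where C: "\<And>y. y \<in> Y \<Longrightarrow> \<bar>\<phi> y\<bar> \<le> C" using cont_bounded[OF cY \<phi>] by blast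
  have c1: "continuous_on (Gset f Y U) (\<lambda>z. \<phi> (fst z))"
    by (rule continuous_on_compose2[OF \<phi> continuous_on_fst]) (use G_Y in auto)
  have c2: "continuous_on (Gset f Y U) (\<lambda>z. \<phi> (f (fst z) (snd z)))"
    by (rule continuous_on_compose2[OF \<phi> fG]) (use G_Y in auto)
  show "integrable N (\<lambda>z. \<phi> (fst z))" by (rule int_cont[OF N c1, of C]) (use C G_Y in auto)
  show "integrable N (\<lambda>z. \<phi> (f (fst z) (snd z)))" by (rule int_cont[OF N c2, of C]) (use C G_Y in auto)
  show "integrable N (\<lambda>z. k (fst z) (snd z))" by (rule int_cont[OF N kG, of M]) (use kM in auto)
qed

lemma W_props:
  assumes "\<gamma> \<in> Wset f Y U"
  shows "prob_space \<gamma>" "finite_measure \<gamma>" "sets \<gamma> = sets (restrict_space borel (Gset f Y U))"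
  using assms unfolding Wset_def borel_prob_on_def by (auto intro: prob_space.finite_measure)

lemma W_shift:
  assumes g: "\<gamma> \<in> Wset f Y U" and \<phi>: "continuous_on Y (\<phi> :: 'y \<Rightarrow> real)"
  shows "(\<integral>z. \<phi> (f (fst z) (snd z)) \<partial>\<gamma>) = (\<integral>z. \<phi> (fst z) \<partial>\<gamma>)"
proof -
  have "(\<integral>z. \<phi> (f (fst z) (snd z)) - \<phi> (fst z) \<partial>\<gamma>) = 0" using g \<phi> unfolding Wset_def by auto
  moreover note i = int_lemmas[OF W_props(2,3)[OF g] \<phi>]
  ultimately show ?thesis using Bochner_Integration.integral_diff[OF i(2) i(1)] by simp
qed

end


context ctx2
begin

lemma constr_use:
  assumes g: "\<gamma> \<in> Wset f Y U" and xi: "borel_finite_on (Gset f Y U) \<xi>"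
    and con: "\<forall>\<phi>::'y \<Rightarrow> real. continuous_on Y \<phi> \<longrightarrow>
        (\<integral>z. \<phi> y0 - \<phi> (fst z) \<partial>\<gamma>) + (\<integral>z. \<phi> (f (fst z) (snd z)) - \<phi> (fst z) \<partial>\<xi>) = 0"
    and \<phi>: "continuous_on Y (\<phi> :: 'y \<Rightarrow> real)"
    and D: "\<And>z. z \<in> Gset f Y U \<Longrightarrow> \<phi> (fst z) - \<phi> (f (fst z) (snd z)) \<le> D"
  shows "\<phi> y0 \<le> (\<integral>z. \<phi> (fst z) \<partial>\<gamma>) + D * measure \<xi> (space \<xi>)"
proof -
  have xf: "finite_measure \<xi>" and xs: "sets \<xi> = sets (restrict_space borel (Gset f Y U))"
    using xi unfolding borel_finite_on_def by auto
  note ig = int_lemmas[OF W_props(2,3)[OF g] \<phi>]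
  note ix = int_lemmas[OF xf xs \<phi>]
  have e1: "(\<integral>z. \<phi> y0 - \<phi> (fst z) \<partial>\<gamma>) = \<phi> y0 - (\<integral>z. \<phi> (fst z) \<partial>\<gamma>)"
    using Bochner_Integration.integral_diff[OF finite_measure.integrable_const[OF W_props(2)[OF g]] ig(1)]
      prob_int_const[OF W_props(1)[OF g]] by simp
  have "(\<integral>z. - D \<partial>\<xi>) \<le> (\<integral>z. \<phi> (f (fst z) (snd z)) - \<phi> (fst z) \<partial>\<xi>)"
  proof (rule integral_mono[OF finite_measure.integrable_const[OF xf] Bochner_Integration.integrable_diff[OF ix(2) ix(1)]])
    fix z assume "z \<in> space \<xi>"
    then have "z \<in> Gset f Y U" using space_G[OF xs] by simp
    then show "- D \<le> \<phi> (f (fst z) (snd z)) - \<phi> (fst z)" using D[of z] by linarith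
  qed
  then have "- D * measure \<xi> (space \<xi>) \<le> (\<integral>z. \<phi> (f (fst z) (snd z)) - \<phi> (fst z) \<partial>\<xi>)"
    by (simp add: mult.commute)
  then show ?thesis using con \<phi> e1 by force
qed

lemma Ik_cont:
  assumes cont: "\<forall>T::nat. T > 1 \<longrightarrow> continuous_on Y (V_T f k Y U T)" and T: "T \<ge> 2"
  shows "continuous_on Y (Ik f k Y U T)"
proof -
  have "Ik f k Y U T = (\<lambda>z. real T * V_T f k Y U T z)" using T by (auto simp: V_T_Ik)
  moreover have "continuous_on Y (\<lambda>z. real T * V_T f k Y U T z)"
    using cont T by (intro continuous_on_mult continuous_on_const) auto
  ultimately show ?thesis by simp
qed

lemma primal_T:
  assumes g: "\<gamma> \<in> Wset f Y U" and xi: "borel_finite_on (Gset f Y U) \<xi>"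
    and con: "\<forall>\<phi>::'y \<Rightarrow> real. continuous_on Y \<phi> \<longrightarrow>
        (\<integral>z. \<phi> y0 - \<phi> (fst z) \<partial>\<gamma>) + (\<integral>z. \<phi> (f (fst z) (snd z)) - \<phi> (fst z) \<partial>\<xi>) = 0"
    and cont: "\<forall>T::nat. T > 1 \<longrightarrow> continuous_on Y (V_T f k Y U T)"
    and T: "T \<ge> 2"
  shows "V_T f k Y U T y0 \<le> (\<integral>z. k (fst z) (snd z) \<partial>\<gamma>)
     + (2 * M + 2 * M * measure \<xi> (space \<xi>) - 2 * (\<integral>z. k (fst z) (snd z) \<partial>\<gamma>)) / real T"
proof -
  define K where "K = (\<integral>z. k (fst z) (snd z) \<partial>\<gamma>)"
  define m where "m = measure \<xi> (space \<xi>)"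
  have gs: "space \<gamma> = Gset f Y U" using space_G[OF W_props(3)[OF g]] .
  have J: "(\<integral>z. Ik f k Y U n (fst z) \<partial>\<gamma>) \<le> (real n - 2) * K + 2 * M" if n: "n \<ge> 2" for n
    using n
  proof (induction n rule: nat_induct_at_least)
    case base
    have "(\<integral>z. Ik f k Y U 2 (fst z) \<partial>\<gamma>) \<le> (\<integral>z. 2 * M \<partial>\<gamma>)"
    proof (rule integral_mono[OF int_lemmas(1)[OF W_props(2,3)[OF g] Ik_cont[OF cont order.refl]]
          finite_measure.integrable_const[OF W_props(2)[OF g]]])
      fix z assume "z \<in> space \<gamma>"
      then have "fst z \<in> Y" using gs G_Y by auto
      then show "Ik f k Y U 2 (fst z) \<le> 2 * M" using Ik_abs[of "fst z" 2] by (simp add: abs_le_iff)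
    qed
    then show ?case using prob_space.prob_space[OF W_props(1)[OF g]] by simp
  next
    case (Suc n)
    note c = Ik_cont[OF cont Suc.hyps]
    note c' = Ik_cont[OF cont, of "Suc n"]
    note i = int_lemmas[OF W_props(2,3)[OF g] c]
    note i' = int_lemmas[OF W_props(2,3)[OF g] c']
    have "(\<integral>z. Ik f k Y U (Suc n) (fst z) \<partial>\<gamma>) \<le>
        (\<integral>z. k (fst z) (snd z) + Ik f k Y U n (f (fst z) (snd z)) \<partial>\<gamma>)"
    proof (rule integral_mono[OF i'(1) Bochner_Integration.integrable_add[OF i(3) i(2)]])
      fix z assume "z \<in> space \<gamma>"
      then have "(fst z, snd z) \<in> Gset f Y U" using gs by auto
      then show "Ik f k Y U (Suc n) (fst z) \<le> k (fst z) (snd z) + Ik f k Y U n (f (fst z) (snd z))"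
        by (rule Ik_DP)
    qed (use Suc.hyps in auto)
    also have "\<dots> = K + (\<integral>z. Ik f k Y U n (fst z) \<partial>\<gamma>)"
      using Bochner_Integration.integral_add[OF i(3) i(2)] W_shift[OF g c] K_def by simp
    finally show ?case using Suc.IH by (simp add: algebra_simps)
  qed
  have cT: "continuous_on Y (Ik f k Y U T)" by (rule Ik_cont[OF cont T])
  have "Ik f k Y U T y0 \<le> (\<integral>z. Ik f k Y U T (fst z) \<partial>\<gamma>) + (2 * M) * m"
    unfolding m_def
  proof (rule constr_use[OF g xi con cT])
    fix z assume zG: "z \<in> Gset f Y U"
    obtain S where S: "T = Suc S" using T by (cases T) auto
    have "Ik f k Y U T (fst z) \<le> k (fst z) (snd z) + Ik f k Y U S (f (fst z) (snd z))"
      unfolding S using zG by (intro Ik_DP) auto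
    moreover have "Ik f k Y U S (f (fst z) (snd z)) - M \<le> Ik f k Y U T (f (fst z) (snd z))"
      unfolding S using G_Y[OF zG] by (intro Ik_step) auto
    moreover have "k (fst z) (snd z) \<le> M" using kM[of "fst z" "snd z"] zG by auto
    ultimately show "Ik f k Y U T (fst z) - Ik f k Y U T (f (fst z) (snd z)) \<le> 2 * M" by linarith
  qed
  with J[OF T] have "Ik f k Y U T y0 \<le> (real T - 2) * K + 2 * M + 2 * M * m" by linarith
  then have "Ik f k Y U T y0 / real T \<le> ((real T - 2) * K + 2 * M + 2 * M * m) / real T"
    using T by (intro divide_right_mono) auto
  also have "\<dots> = K + (2 * M + 2 * M * m - 2 * K) / real T"
    using T by (simp add: field_simps)
  finally show ?thesis using T by (simp add: V_T_Ik K_def m_def)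
qed


lemma primal_h:
  assumes g: "\<gamma> \<in> Wset f Y U" and xi: "borel_finite_on (Gset f Y U) \<xi>"
    and con: "\<forall>\<phi>::'y \<Rightarrow> real. continuous_on Y \<phi> \<longrightarrow>
        (\<integral>z. \<phi> y0 - \<phi> (fst z) \<partial>\<gamma>) + (\<integral>z. \<phi> (f (fst z) (snd z)) - \<phi> (fst z) \<partial>\<xi>) = 0"
    and cont: "continuous_on Y (h_disc f k Y U \<alpha>)"
    and al: "0 < \<alpha>" "\<alpha> < 1"
  shows "h_disc f k Y U \<alpha> y0 \<le> (\<integral>z. k (fst z) (snd z) \<partial>\<gamma>)
     + 2 * M * measure \<xi> (space \<xi>) * (1 - \<alpha>)"
proof -
  define h where "h = h_disc f k Y U \<alpha>"
  define K where "K = (\<integral>z. k (fst z) (snd z) \<partial>\<gamma>)"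
  have gs: "space \<gamma> = Gset f Y U" using space_G[OF W_props(3)[OF g]] .
  have hc: "continuous_on Y h" using cont h_def by simp
  have DP: "h y \<le> (1 - \<alpha>) * k y a + \<alpha> * h (f y a)" if "(y, a) \<in> Gset f Y U" for y a
  proof -
    have "(1 - \<alpha>) * Hd f k Y U \<alpha> y \<le> (1 - \<alpha>) * (k y a + \<alpha> * Hd f k Y U \<alpha> (f y a))"
      using Hd_DP[OF that al] al by (intro mult_left_mono) auto
    then show ?thesis by (simp add: h_def h_disc_Hd algebra_simps)
  qed
  have hlow: "- M \<le> h z" if "z \<in> Y" for z
  proof -
    have "(1 - \<alpha>) * (- (M / (1 - \<alpha>))) \<le> (1 - \<alpha>) * Hd f k Y U \<alpha> z"
      using Hd_ge[OF that al] al by (intro mult_left_mono) auto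
    then show ?thesis using al by (simp add: h_def h_disc_Hd)
  qed
  note i = int_lemmas[OF W_props(2,3)[OF g] hc]
  have "(\<integral>z. h (fst z) \<partial>\<gamma>) \<le> (\<integral>z. (1 - \<alpha>) * k (fst z) (snd z) + \<alpha> * h (f (fst z) (snd z)) \<partial>\<gamma>)"
  proof (rule integral_mono[OF i(1)])
    show "integrable \<gamma> (\<lambda>z. (1 - \<alpha>) * k (fst z) (snd z) + \<alpha> * h (f (fst z) (snd z)))"
      by (intro Bochner_Integration.integrable_add integrable_mult_right i)
    fix z assume "z \<in> space \<gamma>"
    then have "(fst z, snd z) \<in> Gset f Y U" using gs by auto
    then show "h (fst z) \<le> (1 - \<alpha>) * k (fst z) (snd z) + \<alpha> * h (f (fst z) (snd z))" by (rule DP)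
  qed
  also have "\<dots> = (1 - \<alpha>) * K + \<alpha> * (\<integral>z. h (fst z) \<partial>\<gamma>)"
    using Bochner_Integration.integral_add[OF integrable_mult_right[OF i(3)] integrable_mult_right[OF i(2)]]
      W_shift[OF g hc] K_def by simp
  finally have "(1 - \<alpha>) * (\<integral>z. h (fst z) \<partial>\<gamma>) \<le> (1 - \<alpha>) * K" by (simp add: algebra_simps)
  then have Jh: "(\<integral>z. h (fst z) \<partial>\<gamma>) \<le> K" using al by simp
  have "h y0 \<le> (\<integral>z. h (fst z) \<partial>\<gamma>) + (2 * M * (1 - \<alpha>)) * measure \<xi> (space \<xi>)"
  proof (rule constr_use[OF g xi con hc])
    fix z assume zG: "z \<in> Gset f Y U"
    have "h (fst z) \<le> (1 - \<alpha>) * k (fst z) (snd z) + \<alpha> * h (f (fst z) (snd z))"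
      using DP[of "fst z" "snd z"] zG by auto
    moreover have "(1 - \<alpha>) * (k (fst z) (snd z) - h (f (fst z) (snd z))) \<le> (1 - \<alpha>) * (2 * M)"
    proof (rule mult_left_mono)
      show "k (fst z) (snd z) - h (f (fst z) (snd z)) \<le> 2 * M"
        using kM[of "fst z" "snd z"] zG hlow[OF G_Y(2)[OF zG]] by auto
    qed (use al in auto)
    ultimately show "h (fst z) - h (f (fst z) (snd z)) \<le> 2 * M * (1 - \<alpha>)"
      by (simp add: algebra_simps)
  qed
  then show ?thesis using Jh unfolding h_def K_def by (simp add: algebra_simps)
qed

end


lemma Limsup_le_lim:
  assumes "\<not> trivial_limit F" "(g \<longlongrightarrow> c) F" "eventually (\<lambda>x. v x \<le> g x) F"
  shows "Limsup F (\<lambda>x. ereal (v x)) \<le> ereal c"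
proof -
  have "Limsup F (\<lambda>x. ereal (v x)) \<le> Limsup F (\<lambda>x. ereal (g x))"
    by (rule Limsup_mono) (use assms(3) in \<open>auto elim: eventually_mono\<close>)
  also have "\<dots> = ereal c" by (rule lim_imp_Limsup[OF assms(1) tendsto_ereal[OF assms(2)]])
  finally show ?thesis .
qed

lemma Liminf_ge_lim:
  assumes "\<not> trivial_limit F" "(g \<longlongrightarrow> c) F" "eventually (\<lambda>x. g x \<le> v x) F"
  shows "ereal c \<le> Liminf F (\<lambda>x. ereal (v x))"
proof -
  have "ereal c = Liminf F (\<lambda>x. ereal (g x))"
    by (rule lim_imp_Liminf[OF assms(1) tendsto_ereal[OF assms(2)], symmetric])
  also have "\<dots> \<le> Liminf F (\<lambda>x. ereal (v x))"
    by (rule Liminf_mono) (use assms(3) in \<open>auto elim: eventually_mono\<close>)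
  finally show ?thesis .
qed

lemma squeeze:
  fixes d :: ereal
  assumes "\<not> trivial_limit F" "d \<le> Liminf F v" "Limsup F v \<le> d"
  shows "(v \<longlongrightarrow> d) F"
proof -
  have "Liminf F v \<le> Limsup F v" by (rule Liminf_le_Limsup[OF assms(1)])
  then have "Liminf F v = d" "Limsup F v = d" using assms by auto
  then show ?thesis by (rule Liminf_eq_Limsup[OF assms(1)])
qed

theorem proposition4p1:
  fixes Y :: "'y::euclidean_space set" and U0 :: "'u::metric_space set"
    and U :: "'y \<Rightarrow> 'u set" and f :: "'y \<Rightarrow> 'u \<Rightarrow> 'y" and k :: "'y \<Rightarrow> 'u \<Rightarrow> real"
    and y0 :: 'y
  assumes "Y \<noteq> {}" and "compact Y" and "compact U0"
    and "\<forall>y\<in>Y. U y \<subseteq> U0 \<and> compact (U y)"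
    and "usc_on Y U"
    and "continuous_on (UNIV \<times> U0) (\<lambda>(y, u). f y u)"
    and "continuous_on (UNIV \<times> U0) (\<lambda>(y, u). k y u)"
    and "\<forall>y\<in>Y. Aset f Y U y \<noteq> {}"
    and "y0 \<in> Y"
    and "d_star f k Y U y0 = k_star f k Y U y0"
  shows "((\<forall>T::nat. T > 1 \<longrightarrow> continuous_on Y (V_T f k Y U T)) \<longrightarrow>
            ((\<lambda>T. ereal (V_T f k Y U T y0)) \<longlongrightarrow> d_star f k Y U y0) sequentially)
       \<and> ((\<forall>\<alpha>\<in>{0<..<1::real}. continuous_on Y (h_disc f k Y U \<alpha>)) \<longrightarrow>
            ((\<lambda>\<alpha>. ereal (h_disc f k Y U \<alpha> y0)) \<longlongrightarrow> d_star f k Y U y0) (at_left 1))"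
proof -
  have GY: "Gset f Y U \<subseteq> Y \<times> U0" using assms(4) by (auto simp: Gset_def Aset_def)
  have kfun: "(\<lambda>(y, u). k y u) = (\<lambda>z. k (fst z) (snd z))" by (rule ext) (simp add: case_prod_beta)
  have ffun: "(\<lambda>(y, u). f y u) = (\<lambda>z. f (fst z) (snd z))" by (rule ext) (simp add: case_prod_beta)
  have kYU: "continuous_on (Y \<times> U0) (\<lambda>z. k (fst z) (snd z))"
    using continuous_on_subset[OF assms(7), of "Y \<times> U0"] unfolding kfun by auto
  obtain M where M: "\<And>z. z \<in> Y \<times> U0 \<Longrightarrow> \<bar>k (fst z) (snd z)\<bar> \<le> M"
    using cont_bounded[OF compact_Times[OF assms(2,3)] kYU] by blast
  interpret c: ctx2 Y U0 U f k M
  proof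
    show "\<forall>y\<in>Y. Aset f Y U y \<noteq> {}" by (rule assms(8))
    show "\<And>y a. (y, a) \<in> Gset f Y U \<Longrightarrow> \<bar>k y a\<bar> \<le> M" using M GY by force
    show "compact Y" by (rule assms(2))
    show "continuous_on (Gset f Y U) (\<lambda>z. f (fst z) (snd z))"
      using continuous_on_subset[OF assms(6), of "Gset f Y U"] GY unfolding ffun by auto
    show "continuous_on (Gset f Y U) (\<lambda>z. k (fst z) (snd z))"
      using continuous_on_subset[OF kYU GY] .
  qed
  have dual: "\<exists>B. (\<forall>T>0. \<mu> - 2 * B / real T \<le> V_T f k Y U T y0)
       \<and> (\<forall>\<alpha>\<in>{0<..<1}. \<mu> - 2 * B * (1 - \<alpha>) \<le> h_disc f k Y U \<alpha> y0)"
    if Pm: "\<exists>\<psi> \<eta> :: 'y \<Rightarrow> real.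
     continuous_on Y \<psi> \<and> continuous_on Y \<eta> \<and>
     (\<forall>(y, u) \<in> Gset f Y U.
        k y u + \<psi> y0 - \<psi> y + \<eta> (f y u) - \<eta> y - \<mu> \<ge> 0 \<and> \<psi> (f y u) - \<psi> y \<ge> 0)" for \<mu>
  proof -
    obtain \<psi> \<eta> :: "'y \<Rightarrow> real" where ce: "continuous_on Y \<eta>" and
      feas: "\<forall>(y, u) \<in> Gset f Y U.
        k y u + \<psi> y0 - \<psi> y + \<eta> (f y u) - \<eta> y - \<mu> \<ge> 0 \<and> \<psi> (f y u) - \<psi> y \<ge> 0"
      using Pm by blast
    obtain B where B: "\<And>y. y \<in> Y \<Longrightarrow> \<bar>\<eta> y\<bar> \<le> B" using cont_bounded[OF assms(2) ce] by blast
    have feas': "\<And>y a. (y, a) \<in> Gset f Y U \<Longrightarrow>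
        k y a + \<psi> y0 - \<psi> y + \<eta> (f y a) - \<eta> y - \<mu> \<ge> 0 \<and> \<psi> (f y a) - \<psi> y \<ge> 0"
      using feas by auto
    have "\<mu> - 2 * B / real T \<le> V_T f k Y U T y0" if T: "T > 0" for T
    proof -
      have "real T * \<mu> - 2 * B \<le> Ik f k Y U T y0" by (rule c.Ik_dual[OF assms(9) feas' B])
      then have "(real T * \<mu> - 2 * B) / real T \<le> Ik f k Y U T y0 / real T"
        using T by (intro divide_right_mono) auto
      then show ?thesis using T by (simp add: V_T_Ik diff_divide_distrib)
    qed
    moreover have "\<mu> - 2 * B * (1 - \<alpha>) \<le> h_disc f k Y U \<alpha> y0" if al: "\<alpha> \<in> {0<..<1}" for \<alpha>
    proof -
      have "\<mu> / (1 - \<alpha>) - 2 * B \<le> Hd f k Y U \<alpha> y0"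
        by (rule c.Hd_dual[OF assms(9) _ _ feas' B]) (use al in auto)
      then have "(1 - \<alpha>) * (\<mu> / (1 - \<alpha>) - 2 * B) \<le> (1 - \<alpha>) * Hd f k Y U \<alpha> y0"
        using al by (intro mult_left_mono) auto
      moreover have "(1 - \<alpha>) * (\<mu> / (1 - \<alpha>) - 2 * B) = \<mu> - 2 * B * (1 - \<alpha>)"
      proof -
        have "(1 - \<alpha>) * (\<mu> / (1 - \<alpha>)) = \<mu>" using al by simp
        then show ?thesis by (simp only: right_diff_distrib) (simp add: algebra_simps)
      qed
      ultimately show ?thesis by (simp add: h_disc_Hd)
    qed
    ultimately show ?thesis by blast
  qed
  show ?thesis
  proof (intro conjI impI)
    assume cont: "\<forall>T::nat. T > 1 \<longrightarrow> continuous_on Y (V_T f k Y U T)"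
    show "((\<lambda>T. ereal (V_T f k Y U T y0)) \<longlongrightarrow> d_star f k Y U y0) sequentially"
    proof (rule squeeze)
      show "d_star f k Y U y0 \<le> Liminf sequentially (\<lambda>T. ereal (V_T f k Y U T y0))"
        unfolding d_star_def
      proof (rule Sup_least)
        fix x assume x: "x \<in> {ereal \<mu> | \<mu>. \<exists>\<psi> \<eta> :: 'y \<Rightarrow> real.
           continuous_on Y \<psi> \<and> continuous_on Y \<eta> \<and>
           (\<forall>(y, u) \<in> Gset f Y U.
              k y u + \<psi> y0 - \<psi> y + \<eta> (f y u) - \<eta> y - \<mu> \<ge> 0 \<and> \<psi> (f y u) - \<psi> y \<ge> 0)}"
        then obtain \<mu> where xm: "x = ereal \<mu>" and P: "\<exists>\<psi> \<eta> :: 'y \<Rightarrow> real.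
     continuous_on Y \<psi> \<and> continuous_on Y \<eta> \<and>
     (\<forall>(y, u) \<in> Gset f Y U.
        k y u + \<psi> y0 - \<psi> y + \<eta> (f y u) - \<eta> y - \<mu> \<ge> 0 \<and> \<psi> (f y u) - \<psi> y \<ge> 0)" by blast
        obtain B where B: "\<forall>T>0. \<mu> - 2 * B / real T \<le> V_T f k Y U T y0" using dual[OF P] by blast
        have lim: "((\<lambda>T. \<mu> - 2 * B / real T) \<longlongrightarrow> \<mu> - 0) sequentially"
          by (intro tendsto_intros)
        show "x \<le> Liminf sequentially (\<lambda>T. ereal (V_T f k Y U T y0))"
          unfolding xm
          by (rule Liminf_ge_lim[OF _ lim[simplified]]) (use B in \<open>auto intro: eventually_mono[OF eventually_gt_at_top[of 0]]\<close>)
      qed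
      show "Limsup sequentially (\<lambda>T. ereal (V_T f k Y U T y0)) \<le> d_star f k Y U y0"
        unfolding assms(10) k_star_def
      proof (rule Inf_greatest)
        fix x assume "x \<in> {ereal (\<integral>z. k (fst z) (snd z) \<partial>\<gamma>) | \<gamma> \<xi>.
           \<gamma> \<in> Wset f Y U \<and> borel_finite_on (Gset f Y U) \<xi> \<and>
           (\<forall>\<phi>::'y \<Rightarrow> real. continuous_on Y \<phi> \<longrightarrow>
              (\<integral>z. \<phi> y0 - \<phi> (fst z) \<partial>\<gamma>) + (\<integral>z. \<phi> (f (fst z) (snd z)) - \<phi> (fst z) \<partial>\<xi>) = 0)}"
        then obtain \<gamma> \<xi> where xe: "x = ereal (\<integral>z. k (fst z) (snd z) \<partial>\<gamma>)" and g: "\<gamma> \<in> Wset f Y U"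
          and xi: "borel_finite_on (Gset f Y U) \<xi>" and con: "\<forall>\<phi>::'y \<Rightarrow> real. continuous_on Y \<phi> \<longrightarrow>
              (\<integral>z. \<phi> y0 - \<phi> (fst z) \<partial>\<gamma>) + (\<integral>z. \<phi> (f (fst z) (snd z)) - \<phi> (fst z) \<partial>\<xi>) = 0"
          by blast
        define K where "K = (\<integral>z. k (fst z) (snd z) \<partial>\<gamma>)"
        define C where "C = 2 * M + 2 * M * measure \<xi> (space \<xi>) - 2 * K"
        have lim: "((\<lambda>T. K + C / real T) \<longlongrightarrow> K + 0) sequentially"
          by (intro tendsto_intros)
        have ev: "eventually (\<lambda>T. V_T f k Y U T y0 \<le> K + C / real T) sequentially"
          using eventually_ge_at_top[of 2]
          by (rule eventually_mono) (use c.primal_T[OF g xi con cont] in \<open>simp add: K_def C_def\<close>)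
        show "Limsup sequentially (\<lambda>T. ereal (V_T f k Y U T y0)) \<le> x"
          unfolding xe K_def[symmetric] by (rule Limsup_le_lim[OF _ lim[simplified] ev]) simp
      qed
    qed simp
  next
    assume cont: "\<forall>\<alpha>\<in>{0<..<1::real}. continuous_on Y (h_disc f k Y U \<alpha>)"
    have ev01: "eventually (\<lambda>\<alpha>. \<alpha> \<in> {0<..<1::real}) (at_left 1)"
      by (rule eventually_at_left_real) simp
    show "((\<lambda>\<alpha>. ereal (h_disc f k Y U \<alpha> y0)) \<longlongrightarrow> d_star f k Y U y0) (at_left 1)"
    proof (rule squeeze)
      show "d_star f k Y U y0 \<le> Liminf (at_left 1) (\<lambda>\<alpha>. ereal (h_disc f k Y U \<alpha> y0))"
        unfolding d_star_def
      proof (rule Sup_least)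
        fix x assume x: "x \<in> {ereal \<mu> | \<mu>. \<exists>\<psi> \<eta> :: 'y \<Rightarrow> real.
           continuous_on Y \<psi> \<and> continuous_on Y \<eta> \<and>
           (\<forall>(y, u) \<in> Gset f Y U.
              k y u + \<psi> y0 - \<psi> y + \<eta> (f y u) - \<eta> y - \<mu> \<ge> 0 \<and> \<psi> (f y u) - \<psi> y \<ge> 0)}"
        then obtain \<mu> where xm: "x = ereal \<mu>" and P: "\<exists>\<psi> \<eta> :: 'y \<Rightarrow> real.
     continuous_on Y \<psi> \<and> continuous_on Y \<eta> \<and>
     (\<forall>(y, u) \<in> Gset f Y U.
        k y u + \<psi> y0 - \<psi> y + \<eta> (f y u) - \<eta> y - \<mu> \<ge> 0 \<and> \<psi> (f y u) - \<psi> y \<ge> 0)" by blast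
        obtain B where B: "\<forall>\<alpha>\<in>{0<..<1}. \<mu> - 2 * B * (1 - \<alpha>) \<le> h_disc f k Y U \<alpha> y0"
          using dual[OF P] by blast
        have lim: "((\<lambda>\<alpha>. \<mu> - 2 * B * (1 - \<alpha>)) \<longlongrightarrow> \<mu> - 2 * B * (1 - 1)) (at_left (1::real))"
          by (intro tendsto_intros)
        show "x \<le> Liminf (at_left 1) (\<lambda>\<alpha>. ereal (h_disc f k Y U \<alpha> y0))"
          unfolding xm
          by (rule Liminf_ge_lim[OF _ lim[simplified]]) (use B in \<open>auto intro: eventually_mono[OF ev01]\<close>)
      qed
      show "Limsup (at_left 1) (\<lambda>\<alpha>. ereal (h_disc f k Y U \<alpha> y0)) \<le> d_star f k Y U y0"
        unfolding assms(10) k_star_def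
      proof (rule Inf_greatest)
        fix x assume "x \<in> {ereal (\<integral>z. k (fst z) (snd z) \<partial>\<gamma>) | \<gamma> \<xi>.
           \<gamma> \<in> Wset f Y U \<and> borel_finite_on (Gset f Y U) \<xi> \<and>
           (\<forall>\<phi>::'y \<Rightarrow> real. continuous_on Y \<phi> \<longrightarrow>
              (\<integral>z. \<phi> y0 - \<phi> (fst z) \<partial>\<gamma>) + (\<integral>z. \<phi> (f (fst z) (snd z)) - \<phi> (fst z) \<partial>\<xi>) = 0)}"
        then obtain \<gamma> \<xi> where xe: "x = ereal (\<integral>z. k (fst z) (snd z) \<partial>\<gamma>)" and g: "\<gamma> \<in> Wset f Y U"
          and xi: "borel_finite_on (Gset f Y U) \<xi>" and con: "\<forall>\<phi>::'y \<Rightarrow> real. continuous_on Y \<phi> \<longrightarrow>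
              (\<integral>z. \<phi> y0 - \<phi> (fst z) \<partial>\<gamma>) + (\<integral>z. \<phi> (f (fst z) (snd z)) - \<phi> (fst z) \<partial>\<xi>) = 0"
          by blast
        define K where "K = (\<integral>z. k (fst z) (snd z) \<partial>\<gamma>)"
        define C where "C = 2 * M * measure \<xi> (space \<xi>)"
        have lim: "((\<lambda>\<alpha>. K + C * (1 - \<alpha>)) \<longlongrightarrow> K + C * (1 - 1)) (at_left (1::real))"
          by (intro tendsto_intros)
        have ev: "eventually (\<lambda>\<alpha>. h_disc f k Y U \<alpha> y0 \<le> K + C * (1 - \<alpha>)) (at_left 1)"
          using ev01
        proof (rule eventually_mono)
          fix \<alpha> :: real assume al: "\<alpha> \<in> {0<..<1}"
          show "h_disc f k Y U \<alpha> y0 \<le> K + C * (1 - \<alpha>)"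
            using c.primal_h[OF g xi con _, of \<alpha>] cont al by (simp add: K_def C_def)
        qed
        show "Limsup (at_left 1) (\<lambda>\<alpha>. ereal (h_disc f k Y U \<alpha> y0)) \<le> x"
          unfolding xe K_def[symmetric] by (rule Limsup_le_lim[OF _ lim[simplified] ev]) simp
      qed
    qed simp
  qed
qed


end
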